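(* Let $\lambda_1,\dots,\lambda_n$ be real numbers and set $\lambda_0=\lambda_{n+1}=\infty$. Then $\lambda_i\ge\min(\lambda_{i-1},\lambda_{i+1})$ for every $i\in[n]$ if and only if there exist $x_1,\dots,x_{n-1}\in\mathbb{R}$ such that $\lambda_i=\min(x_i,x_{i-1})$ for every $i\in[n]$, where $x_0=x_n=\infty$. *)

theory Defs
  imports "HOL-Library.Extended_Real"
begin

definition lam_ext :: "nat \<Rightarrow> (nat \<Rightarrow> real) \<Rightarrow> nat \<Rightarrow> ereal" where
  "lam_ext n lam i = (if i = 0 \<or> i = n + 1 then \<infinity> else ereal (lam i))"

definition x_ext :: "nat \<Rightarrow> (nat \<Rightarrow> real) \<Rightarrow> nat \<Rightarrow> ereal" where
  "x_ext n x i = (if i = 0 \<or> i = n then \<infinity> else ereal (x i))"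

end

theory Submission
  imports Defs
begin

theorem lemma8p1:
  fixes n :: nat and lam :: "nat \<Rightarrow> real"
  shows "(\<forall>i\<in>{1..n}. lam_ext n lam i \<ge> min (lam_ext n lam (i - 1)) (lam_ext n lam (i + 1)))
     \<longleftrightarrow> (\<exists>x :: nat \<Rightarrow> real. \<forall>i\<in>{1..n}. ereal (lam i) = min (x_ext n x i) (x_ext n x (i - 1)))"
proof
  assume H: "\<forall>i\<in>{1..n}. lam_ext n lam i \<ge> min (lam_ext n lam (i - 1)) (lam_ext n lam (i + 1))"
  define x where "x = (\<lambda>i. max (lam i) (lam (i+1)))"
  have "\<forall>i\<in>{1..n}. ereal (lam i) = min (x_ext n x i) (x_ext n x (i - 1))"
  proof
    fix i assume i: "i \<in> {1..n}"
    have Hi: "lam_ext n lam i \<ge> min (lam_ext n lam (i - 1)) (lam_ext n lam (i + 1))"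
      using H i by blast
    show "ereal (lam i) = min (x_ext n x i) (x_ext n x (i - 1))"
    proof (cases "i = 1")
      case True
      then show ?thesis using Hi i
        by (cases "n = 1") (auto simp: lam_ext_def x_ext_def x_def min_def max_def)
    next
      case False
      then obtain j where j: "i = Suc j" "j \<ge> 1" using i by (cases i) auto
      show ?thesis
      proof (cases "i = n")
        case True
        then show ?thesis using Hi i j
          by (auto simp: lam_ext_def x_ext_def x_def min_def max_def)
      next
        case False
        then show ?thesis using Hi i j
          by (auto simp: lam_ext_def x_ext_def x_def min_def max_def split: if_splits)
      qed
    qed
  qed
  then show "\<exists>x :: nat \<Rightarrow> real. \<forall>i\<in>{1..n}. ereal (lam i) = min (x_ext n x i) (x_ext n x (i - 1))"
    by blast
next
  assume "\<exists>x :: nat \<Rightarrow> real. \<forall>i\<in>{1..n}. ereal (lam i) = min (x_ext n x i) (x_ext n x (i - 1))"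
  then obtain x :: "nat \<Rightarrow> real" where X: "\<forall>i\<in>{1..n}. ereal (lam i) = min (x_ext n x i) (x_ext n x (i - 1))"
    by blast
  have L: "lam_ext n lam j \<le> x_ext n x j" if "j \<le> n" for j
  proof (cases "j = 0 \<or> j = n")
    case True then show ?thesis by (auto simp: lam_ext_def x_ext_def)
  next
    case False
    then have "ereal (lam j) = min (x_ext n x j) (x_ext n x (j - 1))" using X that by auto
    then show ?thesis using False that by (simp add: lam_ext_def)
  qed
  have R: "lam_ext n lam (j+1) \<le> x_ext n x j" if "j < n" for j
  proof -
    have "ereal (lam (j+1)) = min (x_ext n x (j+1)) (x_ext n x j)" using X that by auto
    then show ?thesis using that by (simp add: lam_ext_def)
  qed
  show "\<forall>i\<in>{1..n}. lam_ext n lam i \<ge> min (lam_ext n lam (i - 1)) (lam_ext n lam (i + 1))"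
  proof
    fix i assume i: "i \<in> {1..n}"
    have e: "lam_ext n lam i = min (x_ext n x i) (x_ext n x (i - 1))"
      using X i by (auto simp: lam_ext_def)
    have a: "lam_ext n lam (i - 1) \<le> x_ext n x (i - 1)" using L i by auto
    have b: "lam_ext n lam (i + 1) \<le> x_ext n x i"
    proof (cases "i = n")
      case True then show ?thesis by (simp add: lam_ext_def x_ext_def)
    next
      case False then show ?thesis using R i by auto
    qed
    show "lam_ext n lam i \<ge> min (lam_ext n lam (i - 1)) (lam_ext n lam (i + 1))"
      unfolding e using a b by (auto simp: min_def)
  qed
qed

end
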